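(* Let $d\ge1$ and let $G$ be a graph with a nonedge $f=uv$. Then $(G,f)$ has the $d$-SIP if and only if, for each atom $A$ of $G\cup f$ that contains both $u$ and $v$, the pair $(A\setminus f,f)$ has the $d$-SIP.
   Context: A linkage $(G,\ell)$: finite simple graph $G$ and $\ell:E(G)\to\mathbb{R}_{\ge0}$ (squared lengths). A $d$-realization is $p:V(G)\to\mathbb{R}^d$ with $\|p(a)-p(b)\|^2=\ell(ab)$ for all $ab\in E(G)$; $\mathcal{C}^d(G,\ell)$ is the set of these. For a nonedge $f=uv$, $\Omega^d_f(G,\ell)=\{\|p(u)-p(v)\|^2:p\in\mathcal{C}^d(G,\ell)\}$; $(G,f)$ has the $d$-SIP if $\Omega^d_f(G,\ell)$ is convex (empty or a closed interval) for every $\ell$. $G\cup f$ adds $f$ as an edge; $A\setminus f$ deletes the edge $f$. A clique is a set of pairwise adjacent vertices (possibly empty); a clique separator of $H$ is a clique $U$ such that $H-U$ has at least two connected components. A graph is an atom if it is nonempty and has no clique separator; an atom of $H$ is an induced subgraph of $H$ that is an atom and is vertex-maximal with this property. *)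

theory Defs
  imports "HOL-Analysis.Analysis"
begin

definition simple_graph :: "'a set \<Rightarrow> 'a set set \<Rightarrow> bool" where
  "simple_graph V E \<longleftrightarrow> finite V \<and>
     (\<forall>e\<in>E. \<exists>x y. x \<in> V \<and> y \<in> V \<and> x \<noteq> y \<and> e = {x, y})"

definition induced_edges :: "'a set set \<Rightarrow> 'a set \<Rightarrow> 'a set set" where
  "induced_edges E S = {e \<in> E. e \<subseteq> S}"

text \<open>d-realizations of the linkage (G, l), with d given by the finite type 'd
  (so d = CARD('d) \<ge> 1); l gives squared lengths.\<close>
definition realization :: "'a set \<Rightarrow> 'a set set \<Rightarrow> ('a set \<Rightarrow> real) \<Rightarrow> ('a \<Rightarrow> real^'d) \<Rightarrow> bool" where
  "realization V E l p \<longleftrightarrow>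
     (\<forall>a b. {a, b} \<in> E \<longrightarrow> (norm (p a - p b))\<^sup>2 = l {a, b})"

definition Omega :: "'d::finite itself \<Rightarrow> 'a set \<Rightarrow> 'a set set \<Rightarrow> ('a set \<Rightarrow> real) \<Rightarrow> 'a \<Rightarrow> 'a \<Rightarrow> real set" where
  "Omega _ V E l u v =
     {(norm (p u - p v))\<^sup>2 | p :: 'a \<Rightarrow> real^'d. realization V E l p}"

definition has_SIP :: "'d::finite itself \<Rightarrow> 'a set \<Rightarrow> 'a set set \<Rightarrow> 'a \<Rightarrow> 'a \<Rightarrow> bool" where
  "has_SIP D V E u v \<longleftrightarrow>
     (\<forall>l :: 'a set \<Rightarrow> real. (\<forall>e\<in>E. 0 \<le> l e) \<longrightarrow> convex (Omega D V E l u v))"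

definition is_clique :: "'a set \<Rightarrow> 'a set set \<Rightarrow> 'a set \<Rightarrow> bool" where
  "is_clique V E U \<longleftrightarrow> U \<subseteq> V \<and> (\<forall>x\<in>U. \<forall>y\<in>U. x \<noteq> y \<longrightarrow> {x, y} \<in> E)"

definition reachable :: "'a set \<Rightarrow> 'a set set \<Rightarrow> 'a \<Rightarrow> 'a \<Rightarrow> bool" where
  "reachable V E = (\<lambda>x y. x \<in> V \<and> y \<in> V \<and> {x, y} \<in> E)\<^sup>*\<^sup>*"

definition components :: "'a set \<Rightarrow> 'a set set \<Rightarrow> 'a set set" where
  "components V E = {{y \<in> V. reachable V E x y} | x. x \<in> V}"

definition clique_separator :: "'a set \<Rightarrow> 'a set set \<Rightarrow> 'a set \<Rightarrow> bool" where
  "clique_separator V E U \<longleftrightarrow> is_clique V E U \<and>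
     card (components (V - U) (induced_edges E (V - U))) \<ge> 2"

definition is_atom :: "'a set \<Rightarrow> 'a set set \<Rightarrow> bool" where
  "is_atom V E \<longleftrightarrow> V \<noteq> {} \<and> \<not> (\<exists>U. clique_separator V E U)"

definition atom_of :: "'a set \<Rightarrow> 'a set set \<Rightarrow> 'a set \<Rightarrow> bool" where
  "atom_of V E S \<longleftrightarrow> S \<subseteq> V \<and> is_atom S (induced_edges E S) \<and>
     (\<forall>T. S \<subset> T \<and> T \<subseteq> V \<longrightarrow> \<not> is_atom T (induced_edges E T))"

end

theory Submission
  imports Defs
begin

definition refl_at :: "'v::real_inner \<Rightarrow> 'v \<Rightarrow> 'v" where
  "refl_at w q = q - (2 * (q \<bullet> w) / (w \<bullet> w)) *\<^sub>R w"

lemma refl_diff: "refl_at w a - refl_at w b = refl_at w (a - b)"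
  unfolding refl_at_def by (simp add: inner_diff_left diff_divide_distrib algebra_simps scaleR_diff_left)

lemma refl_norm: "norm (refl_at w d) = norm d"
proof (cases "w = 0")
  case True then show ?thesis by (simp add: refl_at_def)
next
  case False
  then have "w \<bullet> w \<noteq> 0" by simp
  then show ?thesis unfolding norm_eq refl_at_def
    by (simp add: inner_diff_left inner_diff_right field_simps power2_eq_square inner_commute)
qed

lemma refl_fix: "d \<bullet> w = 0 \<Longrightarrow> refl_at w d = d"
  by (simp add: refl_at_def)

lemma refl_swap:
  assumes "norm b = norm c" "b \<noteq> c"
  shows "refl_at (b - c) b = c"
proof -
  have bb: "b \<bullet> b = c \<bullet> c" using assms(1) norm_eq by blast
  have ne: "(b - c) \<bullet> (b - c) \<noteq> 0" using assms(2) by simp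
  have eq: "(b - c) \<bullet> (b - c) = 2 * (b \<bullet> (b - c))"
    using bb by (simp add: inner_diff_left inner_diff_right inner_commute)
  have "2 * (b \<bullet> (b - c)) / ((b - c) \<bullet> (b - c)) = ((b - c) \<bullet> (b - c)) / ((b - c) \<bullet> (b - c))"
    using eq by simp
  also have "\<dots> = 1" using ne by (rule divide_self)
  finally have fr: "2 * (b \<bullet> (b - c)) / ((b - c) \<bullet> (b - c)) = 1" .
  have "refl_at (b - c) b = b - 1 *\<^sub>R (b - c)" unfolding refl_at_def fr by (rule refl)
  then show ?thesis by simp
qed

lemma inner_from_norms:
  fixes a b :: "'v::real_inner"
  shows "2 * (a \<bullet> b) = (norm a)\<^sup>2 + (norm b)\<^sup>2 - (norm (a - b))\<^sup>2"
  by (simp add: power2_norm_eq_inner inner_diff_left inner_diff_right inner_commute)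

lemma congruent_iso:
  fixes x y :: "'k \<Rightarrow> 'v::real_inner"
  assumes "finite K" "\<forall>i\<in>K. \<forall>j\<in>K. norm (x i - x j) = norm (y i - y j)"
  shows "\<exists>T. (\<forall>a b. norm (T a - T b) = norm (a - b)) \<and> (\<forall>k\<in>K. T (x k) = y k)"
  using assms
proof (induction K rule: finite_induct)
  case empty
  show ?case by (rule exI[of _ id]) simp
next
  case (insert k K)
  then obtain T where Tiso: "\<forall>a b. norm (T a - T b) = norm (a - b)"
    and TK: "\<forall>j\<in>K. T (x j) = y j" by auto
  show ?case
  proof (cases "K = {}")
    case True
    show ?thesis
      by (rule exI[of _ "\<lambda>q. q + (y k - x k)"]) (simp add: True)
  next
    case False
    then obtain k0 where k0: "k0 \<in> K" by auto
    define z where "z = T (x k)"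
    show ?thesis
    proof (cases "z = y k")
      case True
      then show ?thesis using Tiso TK z_def by auto
    next
      case False
      define y0 where "y0 = y k0"
      define b where "b = z - y0"
      define c where "c = y k - y0"
      define w where "w = b - c"
      define R where "R = (\<lambda>q. y0 + refl_at w (q - y0))"
      have nbc: "norm b = norm c"
        using Tiso insert.prems k0 unfolding b_def c_def z_def y0_def
        by (metis TK insert_iff)
      have bc: "b \<noteq> c" using False unfolding b_def c_def by auto
      have Riso: "norm (R a - R a') = norm (a - a')" for a a'
        unfolding R_def using refl_diff[of w "a - y0" "a' - y0"] refl_norm[of w "a - a'"] by simp
      have Rk: "R z = y k"
      proof -
        have "R z = y0 + refl_at (b - c) b" unfolding R_def w_def b_def by simp
        also have "\<dots> = y k" using refl_swap[OF nbc bc] c_def by simp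
        finally show ?thesis .
      qed
      have Rj: "R (y j) = y j" if j: "j \<in> K" for j
      proof -
        define a where "a = y j - y0"
        have n1: "norm (a - b) = norm (a - c)"
        proof -
          have "norm (a - b) = norm (T (x j) - T (x k))" unfolding a_def b_def z_def using TK j by simp
          also have "\<dots> = norm (x j - x k)" using Tiso by simp
          also have "\<dots> = norm (y j - y k)" using insert.prems j by auto
          also have "\<dots> = norm (a - c)" unfolding a_def c_def by simp
          finally show ?thesis .
        qed
        have "2 * (a \<bullet> b) = 2 * (a \<bullet> c)"
          using inner_from_norms[of a b] inner_from_norms[of a c] n1 nbc by simp
        then have "a \<bullet> w = 0" unfolding w_def by (simp add: inner_diff_right)
        then show ?thesis unfolding R_def using refl_fix[of a w] a_def by simp
      qed
      show ?thesis
        apply (rule exI[of _ "R \<circ> T"])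
        using Riso Tiso Rk Rj TK z_def by auto
    qed
  qed
qed

lemma reach_sym: "reachable X E x y \<Longrightarrow> reachable X E y x"
  unfolding reachable_def
proof (induction rule: rtranclp_induct)
  case base then show ?case by simp
next
  case (step y z)
  then have "(\<lambda>x y. x \<in> X \<and> y \<in> X \<and> {x, y} \<in> E) z y" by (simp add: insert_commute)
  then show ?case using step(3) by (rule converse_rtranclp_into_rtranclp)
qed

lemma reach_trans: "reachable X E x y \<Longrightarrow> reachable X E y z \<Longrightarrow> reachable X E x z"
  unfolding reachable_def by (rule rtranclp_trans)

lemma reach_refl: "reachable X E x x"
  unfolding reachable_def by simp

lemma reach_step: "reachable X E x y \<Longrightarrow> y \<in> X \<Longrightarrow> z \<in> X \<Longrightarrow> {y, z} \<in> E \<Longrightarrow> reachable X E x z"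
  unfolding reachable_def by (rule rtranclp.rtrancl_into_rtrancl) auto

lemma reach_mono: "reachable X E x y \<Longrightarrow> X \<subseteq> Y \<Longrightarrow> E \<subseteq> E' \<Longrightarrow> reachable Y E' x y"
proof -
  assume r: "reachable X E x y" and s: "X \<subseteq> Y" "E \<subseteq> E'"
  have "(\<lambda>x y. x \<in> X \<and> y \<in> X \<and> {x, y} \<in> E)\<^sup>*\<^sup>* \<le> (\<lambda>x y. x \<in> Y \<and> y \<in> Y \<and> {x, y} \<in> E')\<^sup>*\<^sup>*"
    by (rule rtranclp_mono) (use s in auto)
  then show ?thesis using r unfolding reachable_def by (simp add: le_fun_def)
qed

lemma induced_mono: "X \<subseteq> Y \<Longrightarrow> induced_edges F X \<subseteq> induced_edges F Y"
  unfolding induced_edges_def by auto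

lemma reach_induced_mono: "reachable X (induced_edges F X) x y \<Longrightarrow> X \<subseteq> Y \<Longrightarrow> reachable Y (induced_edges F Y) x y"
  using reach_mono induced_mono by metis

lemma induced_induced: "A \<subseteq> W \<Longrightarrow> induced_edges (induced_edges F W) A = induced_edges F A"
  unfolding induced_edges_def by auto

lemma finite_components: "finite X \<Longrightarrow> finite (components X E)"
proof -
  assume "finite X"
  moreover have "components X E \<subseteq> Pow X" unfolding components_def by auto
  ultimately show ?thesis by (meson finite_Pow_iff finite_subset)
qed

lemma all_reach:
  assumes "finite X" "card (components X E) < 2" "x \<in> X" "y \<in> X"
  shows "reachable X E x y"
proof (rule ccontr)
  assume nr: "\<not> reachable X E x y"
  define c1 where "c1 = {z \<in> X. reachable X E x z}"
  define c2 where "c2 = {z \<in> X. reachable X E y z}"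
  have "y \<in> c2" "y \<notin> c1" using nr assms reach_refl unfolding c1_def c2_def by auto
  then have ne: "c1 \<noteq> c2" by auto
  have "{c1, c2} \<subseteq> components X E" unfolding components_def c1_def c2_def using assms by auto
  then have "card {c1, c2} \<le> card (components X E)"
    using finite_components[OF assms(1)] card_mono by blast
  then show False using ne assms(2) by simp
qed

lemma other_comp:
  assumes "finite X" "card (components X E) \<ge> 2" "a0 \<in> X"
  shows "\<exists>b\<in>X. \<not> reachable X E a0 b"
proof (rule ccontr)
  assume "\<not> ?thesis"
  then have all: "\<forall>b\<in>X. reachable X E a0 b" by auto
  have "components X E \<subseteq> {{z \<in> X. reachable X E a0 z}}"
  proof
    fix c assume "c \<in> components X E"
    then obtain x where x: "x \<in> X" "c = {z \<in> X. reachable X E x z}" unfolding components_def by auto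
    have "reachable X E x z \<longleftrightarrow> reachable X E a0 z" for z
      using all x reach_sym[of X E a0 x] reach_trans[of X E x a0 z] reach_trans[of X E a0 x z] by blast
    then show "c \<in> {{z \<in> X. reachable X E a0 z}}" using x by auto
  qed
  then have "card (components X E) \<le> card {{z \<in> X. reachable X E a0 z}}"
    by (rule card_mono[rotated]) simp
  then have "card (components X E) \<le> 1" by simp
  then show False using assms(2) by simp
qed

lemma comps_nonempty: "card (components X E) \<ge> 2 \<Longrightarrow> X \<noteq> {}"
  unfolding components_def by auto

lemma simple_graph_induced: "simple_graph V F \<Longrightarrow> W \<subseteq> V \<Longrightarrow> simple_graph W (induced_edges F W)"
  unfolding simple_graph_def induced_edges_def using finite_subset by fastforce

lemma simple_graph_edge: "simple_graph V F \<Longrightarrow> {a, b} \<in> F \<Longrightarrow> a \<in> V \<and> b \<in> V \<and> a \<noteq> b"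
  unfolding simple_graph_def by (metis doubleton_eq_iff)

lemma simple_graph_induced_all: "simple_graph V F \<Longrightarrow> induced_edges F V = F"
  unfolding simple_graph_def induced_edges_def by auto

lemma atom_max_exists:
  assumes "finite V" "A \<subseteq> V" "is_atom A (induced_edges F A)"
  shows "\<exists>T. A \<subseteq> T \<and> atom_of V F T"
proof -
  define S where "S = {T. A \<subseteq> T \<and> T \<subseteq> V \<and> is_atom T (induced_edges F T)}"
  have "finite S" unfolding S_def using assms(1) by (simp add: finite_subset)
  moreover have "A \<in> S" using assms unfolding S_def by auto
  ultimately obtain T where T: "T \<in> S" "\<forall>b\<in>S. T \<le> b \<longrightarrow> T = b"
    using finite_has_maximal by blast
  have "atom_of V F T" unfolding atom_of_def
  proof (intro conjI allI impI)
    show "T \<subseteq> V" "is_atom T (induced_edges F T)" using T unfolding S_def by auto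
  next
    fix T' assume "T \<subset> T' \<and> T' \<subseteq> V"
    then show "\<not> is_atom T' (induced_edges F T')" using T unfolding S_def by auto
  qed
  then show ?thesis using T unfolding S_def by auto
qed

lemma atom_minus_clique:
  assumes "finite A" "is_atom A (induced_edges F A)"
    and clq: "\<forall>x\<in>K. \<forall>y\<in>K. x \<noteq> y \<longrightarrow> {x, y} \<in> F"
    and "x \<in> A - K" "y \<in> A - K"
  shows "reachable (A - K) (induced_edges F (A - K)) x y"
proof -
  have "\<not> clique_separator A (induced_edges F A) (A \<inter> K)"
    using assms(2) unfolding is_atom_def by blast
  moreover have "is_clique A (induced_edges F A) (A \<inter> K)"
    unfolding is_clique_def induced_edges_def using clq by auto
  ultimately have "card (components (A - A \<inter> K) (induced_edges (induced_edges F A) (A - A \<inter> K))) < 2"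
    unfolding clique_separator_def by auto
  moreover have "A - A \<inter> K = A - K" by auto
  moreover have "induced_edges (induced_edges F A) (A - K) = induced_edges F (A - K)"
    by (rule induced_induced) auto
  ultimately have "card (components (A - K) (induced_edges F (A - K))) < 2" by simp
  then show ?thesis using all_reach[of "A - K"] assms by auto
qed

definition rz :: "'a set set \<Rightarrow> ('a set \<Rightarrow> real) \<Rightarrow> ('a \<Rightarrow> 'v::real_normed_vector) \<Rightarrow> bool" where
  "rz F L p \<longleftrightarrow> (\<forall>a b. {a, b} \<in> F \<longrightarrow> (norm (p a - p b))\<^sup>2 = L {a, b})"

lemma rz_mono: "rz F L p \<Longrightarrow> F' \<subseteq> F \<Longrightarrow> rz F' L p"
  unfolding rz_def by auto

lemma split_sep:
  assumes "finite V" "clique_separator V F K" "a0 \<in> V - K"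
  defines "C1 \<equiv> {y \<in> V - K. reachable (V - K) (induced_edges F (V - K)) a0 y}"
  shows "a0 \<in> C1" "\<exists>b \<in> V - K. b \<notin> C1" "K \<subseteq> V" "\<forall>x\<in>K. \<forall>y\<in>K. x \<noteq> y \<longrightarrow> {x, y} \<in> F"
    "C1 \<inter> K = {}" "C1 \<subseteq> V"
    and "\<And>a b. {a, b} \<in> F \<Longrightarrow> a \<in> C1 \<Longrightarrow> b \<in> V \<Longrightarrow> b \<notin> K \<Longrightarrow> b \<in> C1"
proof -
  show "a0 \<in> C1" unfolding C1_def using assms(3) reach_refl by auto
  have c2: "card (components (V - K) (induced_edges F (V - K))) \<ge> 2"
    using assms(2) unfolding clique_separator_def by auto
  show "\<exists>b \<in> V - K. b \<notin> C1"
    using other_comp[OF _ c2 assms(3)] assms(1) unfolding C1_def by auto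
  show "K \<subseteq> V" "\<forall>x\<in>K. \<forall>y\<in>K. x \<noteq> y \<longrightarrow> {x, y} \<in> F"
    using assms(2) unfolding clique_separator_def is_clique_def by auto
  show "C1 \<inter> K = {}" "C1 \<subseteq> V" unfolding C1_def by auto
  fix a b assume ab: "{a, b} \<in> F" "a \<in> C1" "b \<in> V" "b \<notin> K"
  then have "reachable (V - K) (induced_edges F (V - K)) a0 a" "a \<in> V - K" unfolding C1_def by auto
  moreover have "{a, b} \<in> induced_edges F (V - K)" using ab \<open>a \<in> V - K\<close> unfolding induced_edges_def by auto
  ultimately have "reachable (V - K) (induced_edges F (V - K)) a0 b"
    using reach_step ab by (metis Diff_iff)
  then show "b \<in> C1" unfolding C1_def using ab by auto
qed

lemma glue:
  fixes L :: "'a set \<Rightarrow> real"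
  assumes "simple_graph V F" "\<forall>A. atom_of V F A \<longrightarrow> (\<exists>p::'a \<Rightarrow> real^'d. rz (induced_edges F A) L p)"
  shows "\<exists>p::'a \<Rightarrow> real^'d. rz F L p"
  using assms
proof (induction "card V" arbitrary: V F rule: less_induct)
  case less
  have fin: "finite V" using less.prems(1) unfolding simple_graph_def by auto
  show ?case
  proof (cases "V = {}")
    case True
    then have "F = {}" using less.prems(1) unfolding simple_graph_def by auto
    then show ?thesis unfolding rz_def by auto
  next
    case Vne: False
    show ?thesis
    proof (cases "is_atom V F")
      case True
      have "atom_of V F V" unfolding atom_of_def
        using True simple_graph_induced_all[OF less.prems(1)] by auto
      then obtain p :: "'a \<Rightarrow> real^'d" where "rz (induced_edges F V) L p" using less.prems(2) by blast
      then show ?thesis using simple_graph_induced_all[OF less.prems(1)] by auto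
    next
      case False
      then obtain K where K: "clique_separator V F K" using Vne unfolding is_atom_def by auto
      then have "card (components (V - K) (induced_edges F (V - K))) \<ge> 2"
        unfolding clique_separator_def by auto
      then obtain a0 where a0: "a0 \<in> V - K" using comps_nonempty by blast
      define C1 where "C1 = {y \<in> V - K. reachable (V - K) (induced_edges F (V - K)) a0 y}"
      note sp = split_sep[OF fin K a0, folded C1_def]
      define W1 where "W1 = K \<union> C1"
      define W2 where "W2 = V - C1"
      have W1V: "W1 \<subseteq> V" "W2 \<subseteq> V" using sp unfolding W1_def W2_def by auto
      have c1: "card W1 < card V"
      proof -
        obtain b where "b \<in> V - K" "b \<notin> C1" using sp by auto
        then have "W1 \<subset> V" using W1V unfolding W1_def by auto
        then show ?thesis using fin psubset_card_mono by auto
      qed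
      have c2: "card W2 < card V"
      proof -
        have "W2 \<subset> V" using W1V sp(1) a0 unfolding W2_def by auto
        then show ?thesis using fin psubset_card_mono by auto
      qed
      have hyp: "\<forall>A. atom_of W (induced_edges F W) A \<longrightarrow> (\<exists>p::'a \<Rightarrow> real^'d. rz (induced_edges (induced_edges F W) A) L p)"
        if "W \<subseteq> V" for W
      proof (intro allI impI)
        fix A assume A: "atom_of W (induced_edges F W) A"
        then have AW: "A \<subseteq> W" unfolding atom_of_def by auto
        have ii: "induced_edges (induced_edges F W) A = induced_edges F A" using induced_induced[OF AW] .
        have "is_atom A (induced_edges F A)" using A ii unfolding atom_of_def by auto
        moreover have "A \<subseteq> V" using AW that by blast
        ultimately obtain T where T: "A \<subseteq> T" "atom_of V F T" using atom_max_exists[OF fin] by blast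
        then obtain p :: "'a \<Rightarrow> real^'d" where "rz (induced_edges F T) L p" using less.prems(2) by blast
        then have "rz (induced_edges F A) L p" using rz_mono induced_mono[OF T(1)] by blast
        then show "\<exists>p::'a \<Rightarrow> real^'d. rz (induced_edges (induced_edges F W) A) L p" using ii by auto
      qed
      obtain p1 :: "'a \<Rightarrow> real^'d" where p1: "rz (induced_edges F W1) L p1"
        using less.hyps[OF c1 simple_graph_induced[OF less.prems(1) W1V(1)] hyp[OF W1V(1)]] by blast
      obtain p2 :: "'a \<Rightarrow> real^'d" where p2: "rz (induced_edges F W2) L p2"
        using less.hyps[OF c2 simple_graph_induced[OF less.prems(1) W1V(2)] hyp[OF W1V(2)]] by blast
      have KW: "K \<subseteq> W1" "K \<subseteq> W2" using sp unfolding W1_def W2_def by auto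
      have "\<forall>i\<in>K. \<forall>j\<in>K. norm (p2 i - p2 j) = norm (p1 i - p1 j)"
      proof (intro ballI)
        fix i j assume ij: "i \<in> K" "j \<in> K"
        show "norm (p2 i - p2 j) = norm (p1 i - p1 j)"
        proof (cases "i = j")
          case False
          then have e: "{i, j} \<in> F" using sp(4) ij by auto
          have "{i, j} \<in> induced_edges F W1" "{i, j} \<in> induced_edges F W2"
            using e ij KW unfolding induced_edges_def by auto
          then have "(norm (p2 i - p2 j))\<^sup>2 = (norm (p1 i - p1 j))\<^sup>2"
            using p1 p2 unfolding rz_def by auto
          then show ?thesis by (simp add: power2_eq_iff_nonneg)
        qed simp
      qed
      moreover have "finite K" using fin sp(3) finite_subset by auto
      ultimately obtain T :: "real^'d \<Rightarrow> real^'d" where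
        Tiso: "\<forall>a b. norm (T a - T b) = norm (a - b)" and TK: "\<forall>k\<in>K. T (p2 k) = p1 k"
        using congruent_iso[of K p2 p1] by blast
      define p where "p = (\<lambda>x. if x \<in> W1 then p1 x else T (p2 x))"
      have pW2: "p x = T (p2 x)" if "x \<in> W2" for x
        using that TK unfolding p_def W1_def W2_def by auto
      have "rz F L p" unfolding rz_def
      proof (intro allI impI)
        fix a b assume ab: "{a, b} \<in> F"
        then have abV: "a \<in> V" "b \<in> V" using simple_graph_edge[OF less.prems(1)] by auto
        show "(norm (p a - p b))\<^sup>2 = L {a, b}"
        proof (cases "a \<in> W1 \<and> b \<in> W1")
          case True
          then have "{a, b} \<in> induced_edges F W1" using ab unfolding induced_edges_def by auto
          then show ?thesis using p1 True unfolding rz_def p_def by auto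
        next
          case nW1: False
          show ?thesis
          proof (cases "a \<in> W2 \<and> b \<in> W2")
            case True
            then have "{a, b} \<in> induced_edges F W2" using ab unfolding induced_edges_def by auto
            then show ?thesis using p2 True pW2 Tiso unfolding rz_def by auto
          next
            case False
            have "a \<in> C1 \<and> b \<notin> W1 \<or> b \<in> C1 \<and> a \<notin> W1"
              using nW1 False abV unfolding W1_def W2_def by auto
            then show ?thesis
            proof
              assume "a \<in> C1 \<and> b \<notin> W1"
              then have "b \<in> C1" using sp(7)[OF ab] abV unfolding W1_def by blast
              then show ?thesis using \<open>a \<in> C1 \<and> b \<notin> W1\<close> unfolding W1_def by blast
            next
              assume "b \<in> C1 \<and> a \<notin> W1"
              moreover have "{b, a} \<in> F" using ab by (simp add: insert_commute)
              ultimately have "a \<in> C1" using sp(7) abV unfolding W1_def by blast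
              then show ?thesis using \<open>b \<in> C1 \<and> a \<notin> W1\<close> unfolding W1_def by blast
            qed
          qed
        qed
      qed
      then show ?thesis by blast
    qed
  qed
qed

lemma real_rz: "realization V E l p = rz E l p"
  unfolding realization_def rz_def by simp

lemma ext_eq:
  assumes "f = {u, v}" "f \<in> F0"
  shows "rz F0 (l(f := t)) p \<longleftrightarrow> rz (F0 - {f}) l p \<and> (norm (p u - p v))\<^sup>2 = t"
proof
  assume r: "rz F0 (l(f := t)) p"
  have "rz (F0 - {f}) l p" using r unfolding rz_def by auto
  moreover have "(norm (p u - p v))\<^sup>2 = t" using r assms unfolding rz_def by auto
  ultimately show "rz (F0 - {f}) l p \<and> (norm (p u - p v))\<^sup>2 = t" by auto
next
  assume r: "rz (F0 - {f}) l p \<and> (norm (p u - p v))\<^sup>2 = t"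
  show "rz F0 (l(f := t)) p" unfolding rz_def
  proof (intro allI impI)
    fix a b assume ab: "{a, b} \<in> F0"
    show "(norm (p a - p b))\<^sup>2 = (l(f := t)) {a, b}"
    proof (cases "{a, b} = f")
      case True
      then have "a = u \<and> b = v \<or> a = v \<and> b = u" using assms(1) by (simp add: doubleton_eq_iff)
      then have "norm (p a - p b) = norm (p u - p v)" by (auto simp: norm_minus_commute)
      then show ?thesis using True r by simp
    next
      case False
      then show ?thesis using r ab unfolding rz_def by auto
    qed
  qed
qed

lemma ext_eq2: "f \<notin> F0 \<Longrightarrow> rz F0 (l(f := t)) p \<longleftrightarrow> rz F0 l p"
  unfolding rz_def by (metis fun_upd_other)

lemma sip_if:
  fixes D :: "'d::finite itself"
  assumes sg: "simple_graph V E" and uv: "u \<in> V" "v \<in> V" "u \<noteq> v" "{u, v} \<notin> E"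
    and H: "\<forall>A. atom_of V (insert {u, v} E) A \<and> u \<in> A \<and> v \<in> A \<longrightarrow>
       has_SIP D A (induced_edges (insert {u, v} E) A - {{u, v}}) u v"
  shows "has_SIP D V E u v"
  unfolding has_SIP_def
proof (intro allI impI)
  fix l :: "'a set \<Rightarrow> real"
  assume nn: "\<forall>e\<in>E. 0 \<le> l e"
  define f where "f = {u, v}"
  define F where "F = insert f E"
  have sgF: "simple_graph V F" using sg uv unfolding F_def f_def simple_graph_def by blast
  have FE: "F - {f} = E" using uv unfolding F_def f_def by auto
  define S where "S = (\<lambda>A. {t::real. \<exists>p::'a \<Rightarrow> real^'d. rz (induced_edges F A) (l(f := t)) p})"
  have c1: "Omega D V E l u v = \<Inter> (S ` {A. atom_of V F A})"
  proof (rule set_eqI)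
    fix t
    have "t \<in> Omega D V E l u v \<longleftrightarrow> (\<exists>p::'a \<Rightarrow> real^'d. rz E l p \<and> (norm (p u - p v))\<^sup>2 = t)"
      unfolding Omega_def real_rz by auto
    also have "\<dots> \<longleftrightarrow> (\<exists>p::'a \<Rightarrow> real^'d. rz F (l(f := t)) p)"
      using ext_eq[of f u v F l t] FE unfolding F_def f_def by auto
    also have "\<dots> \<longleftrightarrow> (\<forall>A. atom_of V F A \<longrightarrow> (\<exists>p::'a \<Rightarrow> real^'d. rz (induced_edges F A) (l(f := t)) p))"
    proof
      assume "\<exists>p::'a \<Rightarrow> real^'d. rz F (l(f := t)) p"
      then obtain p :: "'a \<Rightarrow> real^'d" where "rz F (l(f := t)) p" by blast
      moreover have "induced_edges F A \<subseteq> F" for A unfolding induced_edges_def by auto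
      ultimately show "\<forall>A. atom_of V F A \<longrightarrow> (\<exists>p::'a \<Rightarrow> real^'d. rz (induced_edges F A) (l(f := t)) p)"
        using rz_mono by blast
    next
      assume "\<forall>A. atom_of V F A \<longrightarrow> (\<exists>p::'a \<Rightarrow> real^'d. rz (induced_edges F A) (l(f := t)) p)"
      then show "\<exists>p::'a \<Rightarrow> real^'d. rz F (l(f := t)) p" using glue[OF sgF] by blast
    qed
    also have "\<dots> \<longleftrightarrow> t \<in> \<Inter> (S ` {A. atom_of V F A})" unfolding S_def by auto
    finally show "t \<in> Omega D V E l u v \<longleftrightarrow> t \<in> \<Inter> (S ` {A. atom_of V F A})" .
  qed
  have c2: "convex (S A)" if A: "atom_of V F A" for A
  proof (cases "u \<in> A \<and> v \<in> A")
    case True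
    have fin: "f \<in> induced_edges F A" using True unfolding F_def f_def induced_edges_def by auto
    have "S A = Omega D A (induced_edges F A - {f}) l u v"
      unfolding S_def Omega_def real_rz using ext_eq[OF f_def fin] by auto
    moreover have "has_SIP D A (induced_edges F A - {f}) u v"
      using H A True unfolding F_def f_def by auto
    moreover have "\<forall>e\<in>induced_edges F A - {f}. 0 \<le> l e"
      using nn unfolding F_def induced_edges_def by auto
    ultimately show ?thesis unfolding has_SIP_def by auto
  next
    case False
    have fin: "f \<notin> induced_edges F A" using False unfolding f_def induced_edges_def by auto
    have "S A = {t. \<exists>p::'a \<Rightarrow> real^'d. rz (induced_edges F A) l p}"
      unfolding S_def using ext_eq2[OF fin] by auto
    then have "S A = UNIV \<or> S A = {}" by auto
    then show ?thesis by auto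
  qed
  show "convex (Omega D V E l u v)" unfolding c1
    by (rule convex_Inter) (use c2 in auto)
qed

lemma restrict:
  fixes D :: "'d::finite itself"
  assumes SIP: "has_SIP D V E u v" and W: "u \<in> W" "v \<in> W" "{u, v} \<notin> E" "u \<noteq> v"
    and dbl: "\<forall>e\<in>E. \<exists>a b. e = {a, b}"
    and bd: "\<And>a b. {a, b} \<in> E \<Longrightarrow> a \<notin> W \<Longrightarrow> b \<in> W \<Longrightarrow> b \<in> Q"
    and QW: "Q \<subseteq> W" and clq: "\<forall>x\<in>Q. \<forall>y\<in>Q. x \<noteq> y \<longrightarrow> {x, y} \<in> insert {u, v} E"
  shows "has_SIP D W (induced_edges (insert {u, v} E) W - {{u, v}}) u v"
  unfolding has_SIP_def
proof (intro allI impI)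
  define EW where "EW = induced_edges (insert {u, v} E) W - {{u, v}}"
  fix l :: "'a set \<Rightarrow> real"
  assume lnn: "\<forall>e\<in>induced_edges (insert {u, v} E) W - {{u, v}}. 0 \<le> l e"
  then have lnn': "\<forall>e\<in>EW. 0 \<le> l e" unfolding EW_def .
  have EWE: "{a, b} \<in> E \<Longrightarrow> a \<in> W \<Longrightarrow> b \<in> W \<Longrightarrow> {a, b} \<in> EW" for a b
    using W(3) unfolding EW_def induced_edges_def by auto
  have EWE2: "e \<in> EW \<Longrightarrow> e \<in> E \<and> e \<subseteq> W" for e
    unfolding EW_def induced_edges_def by auto
  show "convex (Omega D W (induced_edges (insert {u, v} E) W - {{u, v}}) l u v)"
    unfolding EW_def[symmetric]
  proof (rule convexI)
    fix x y \<mu> \<nu> :: real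
    assume xO: "x \<in> Omega D W EW l u v" and yO: "y \<in> Omega D W EW l u v"
      and mn: "0 \<le> \<mu>" "0 \<le> \<nu>" "\<mu> + \<nu> = 1"
    obtain px :: "'a \<Rightarrow> real^'d" where px: "rz EW l px" "x = (norm (px u - px v))\<^sup>2"
      using xO unfolding Omega_def real_rz by auto
    obtain py :: "'a \<Rightarrow> real^'d" where py: "rz EW l py" "y = (norm (py u - py v))\<^sup>2"
      using yO unfolding Omega_def real_rz by auto
    obtain e0 :: "real^'d" where e0: "norm e0 = 1" using vector_choose_size[of 1] by auto
    define \<alpha> where "\<alpha> = (sqrt x + sqrt y) / 2"
    define \<beta> where "\<beta> = \<bar>sqrt x - sqrt y\<bar> / 2"
    define hasK where "hasK = (\<exists>k. k \<in> Q \<and> k \<noteq> u \<and> k \<noteq> v)"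
    define k0 where "k0 = (SOME k. k \<in> Q \<and> k \<noteq> u \<and> k \<noteq> v)"
    define dir where "dir = (\<lambda>p::'a \<Rightarrow> real^'d. if p v = p u then e0 else (1 / norm (p v - p u)) *\<^sub>R (p v - p u))"
    define zz where "zz = (\<lambda>p::'a \<Rightarrow> real^'d. p u + \<alpha> *\<^sub>R dir p)"
    define pt where "pt = (\<lambda>p::'a \<Rightarrow> real^'d. if hasK then p k0 else if u \<in> Q \<and> v \<in> Q then zz p
       else if u \<in> Q then p u else p v)"
    define P where "P = (\<lambda>p::'a \<Rightarrow> real^'d. \<lambda>w. if w \<in> W then p w else pt p)"
    define g where "g = (\<lambda>b. if hasK then (if b = k0 then 0 else l {k0, b})
       else if u \<in> Q \<and> v \<in> Q then (if b = u then \<alpha>\<^sup>2 else \<beta>\<^sup>2) else 0)"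
    define lh where "lh = (\<lambda>e. if e \<subseteq> W then l e else if e \<inter> W = {} then 0 else g (THE z. z \<in> e \<inter> W))"
    have sx: "sqrt x \<ge> 0" "sqrt y \<ge> 0" using px(2) py(2) by auto
    have \<alpha>nn: "\<alpha> \<ge> 0" using sx unfolding \<alpha>_def by simp
    have k0: "k0 \<in> Q" "k0 \<noteq> u" "k0 \<noteq> v" if hasK
      using someI_ex[OF that[unfolded hasK_def]] unfolding k0_def by auto
    have dirn: "norm (dir p) = 1" for p
      unfolding dir_def using e0 by auto
    have zzu: "norm (zz p - p u) = \<alpha>" for p
      unfolding zz_def using dirn[of p] \<alpha>nn by simp
    have zzv: "norm (zz p - p v) = \<beta>"
      if n: "norm (p u - p v) = sqrt x \<or> norm (p u - p v) = sqrt y" for p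
    proof -
      define n where "n = norm (p v - p u)"
      have nn: "n = sqrt x \<or> n = sqrt y" using n unfolding n_def by (simp add: norm_minus_commute)
      have e1: "\<alpha> - sqrt x = (sqrt y - sqrt x) / 2" "\<alpha> - sqrt y = (sqrt x - sqrt y) / 2"
        unfolding \<alpha>_def by (simp_all add: field_simps)
      have ab: "\<bar>\<alpha> - n\<bar> = \<beta>" using nn unfolding \<beta>_def
        by (metis e1 abs_divide abs_minus_commute abs_numeral)
      show ?thesis
      proof (cases "p v = p u")
        case True
        then have "n = 0" unfolding n_def by simp
        then have "\<alpha> = \<beta>" using ab sx \<alpha>_def by simp
        moreover have "zz p - p v = \<alpha> *\<^sub>R e0" unfolding zz_def dir_def using True by simp
        ultimately show ?thesis using e0 \<alpha>nn by simp
      next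
        case False
        then have npos: "n > 0" unfolding n_def by simp
        have "zz p - p v = (\<alpha> / n - 1) *\<^sub>R (p v - p u)"
          unfolding zz_def dir_def n_def using False by (simp add: algebra_simps)
        then have "norm (zz p - p v) = \<bar>\<alpha> / n - 1\<bar> * n" unfolding n_def by simp
        also have "\<dots> = \<bar>\<alpha> - n\<bar>" using npos
          by (metis abs_of_pos diff_divide_distrib divide_self_if abs_divide mult.commute nonzero_mult_div_cancel_left order_less_irrefl times_divide_eq_right)
        finally show ?thesis using ab by simp
      qed
    qed
    have side: "(norm (pt p - p b))\<^sup>2 = g b"
      if p: "rz EW l p" "norm (p u - p v) = sqrt x \<or> norm (p u - p v) = sqrt y" and b: "b \<in> Q" for p b
    proof (cases hasK)
      case True
      note k = k0[OF True]
      show ?thesis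
      proof (cases "b = k0")
        case False
        have "{k0, b} \<in> insert {u, v} E" using clq k b False by auto
        moreover have "{k0, b} \<noteq> {u, v}" using k by (auto simp: doubleton_eq_iff)
        ultimately have "{k0, b} \<in> E" by auto
        then have "{k0, b} \<in> EW" using EWE k b QW by auto
        then show ?thesis using p False True unfolding rz_def pt_def g_def by auto
      qed (simp add: pt_def g_def True)
    next
      case False
      note nK = False
      show ?thesis
      proof (cases "u \<in> Q \<and> v \<in> Q")
        case True
        have "b = u \<or> b = v" using nK b unfolding hasK_def by auto
        then show ?thesis
        proof
          assume "b = u" then show ?thesis using zzu nK True unfolding pt_def g_def by simp
        next
          assume "b = v" then show ?thesis using zzv[OF p(2)] nK True W(4) unfolding pt_def g_def by simp
        qed
      next
        case False
        show ?thesis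
        proof (cases "u \<in> Q")
          case True
          then have "b = u" using nK b False unfolding hasK_def by auto
          then show ?thesis using True False nK unfolding pt_def g_def by simp
        next
          case uQ: False
          then have "b = v" using nK b unfolding hasK_def by auto
          then show ?thesis using uQ False nK unfolding pt_def g_def by simp
        qed
      qed
    qed
    have realP: "rz E lh (P p)"
      if p: "rz EW l p" "norm (p u - p v) = sqrt x \<or> norm (p u - p v) = sqrt y" for p
      unfolding rz_def
    proof (intro allI impI)
      fix a b assume ab: "{a, b} \<in> E"
      show "(norm (P p a - P p b))\<^sup>2 = lh {a, b}"
      proof (cases "a \<in> W")
        case aW: True
        show ?thesis
        proof (cases "b \<in> W")
          case True
          then show ?thesis using EWE[OF ab aW True] p(1) aW unfolding rz_def P_def lh_def by auto
        next
          case False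
          have ba: "{b, a} \<in> E" using ab by (simp add: insert_commute)
          have aQ: "a \<in> Q" using bd[OF ba False aW] .
          have th: "(THE z. z \<in> {a, b} \<inter> W) = a" using aW False by (rule_tac the_equality) auto
          have "(norm (P p a - P p b))\<^sup>2 = (norm (pt p - p a))\<^sup>2"
            using aW False unfolding P_def by (simp add: norm_minus_commute)
          also have "\<dots> = g a" using side[OF p aQ] .
          also have "\<dots> = lh {a, b}" unfolding lh_def using th aW False by auto
          finally show ?thesis .
        qed
      next
        case aW: False
        show ?thesis
        proof (cases "b \<in> W")
          case True
          have bQ: "b \<in> Q" using bd[OF ab aW True] .
          have th: "(THE z. z \<in> {a, b} \<inter> W) = b" using aW True by (rule_tac the_equality) auto
          have "(norm (P p a - P p b))\<^sup>2 = (norm (pt p - p b))\<^sup>2"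
            using aW True unfolding P_def by simp
          also have "\<dots> = g b" using side[OF p bQ] .
          also have "\<dots> = lh {a, b}" unfolding lh_def using th aW True by auto
          finally show ?thesis .
        next
          case False
          then show ?thesis using aW unfolding P_def lh_def by auto
        qed
      qed
    qed
    have normx: "norm (px u - px v) = sqrt x" using px(2) by (simp add: real_sqrt_abs)
    have normy: "norm (py u - py v) = sqrt y" using py(2) by (simp add: real_sqrt_abs)
    have rx: "rz E lh (P px)" using realP[OF px(1)] normx by blast
    have ry: "rz E lh (P py)" using realP[OF py(1)] normy by blast
    have lhnn: "\<forall>e\<in>E. 0 \<le> lh e"
    proof
      fix e assume e: "e \<in> E"
      then obtain a b where "e = {a, b}" using dbl by auto
      then show "0 \<le> lh e" using rx e unfolding rz_def by (metis zero_le_power2)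
    qed
    have PW: "P p u = p u" "P p v = p v" for p unfolding P_def using W by auto
    have "x \<in> Omega D V E lh u v" unfolding Omega_def real_rz
      using rx px(2) PW[of px] by (intro CollectI exI[of _ "P px"]) simp
    moreover have "y \<in> Omega D V E lh u v" unfolding Omega_def real_rz
      using ry py(2) PW[of py] by (intro CollectI exI[of _ "P py"]) simp
    moreover have "convex (Omega D V E lh u v)" using SIP lhnn unfolding has_SIP_def by blast
    ultimately have "\<mu> *\<^sub>R x + \<nu> *\<^sub>R y \<in> Omega D V E lh u v" using mn convexD by blast
    then obtain q :: "'a \<Rightarrow> real^'d" where q: "rz E lh q" "\<mu> *\<^sub>R x + \<nu> *\<^sub>R y = (norm (q u - q v))\<^sup>2"
      unfolding Omega_def real_rz by auto
    have "rz EW l q" unfolding rz_def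
    proof (intro allI impI)
      fix a b assume "{a, b} \<in> EW"
      then have "{a, b} \<in> E" "{a, b} \<subseteq> W" using EWE2 by auto
      then show "(norm (q a - q b))\<^sup>2 = l {a, b}" using q(1) unfolding rz_def lh_def by auto
    qed
    then show "\<mu> *\<^sub>R x + \<nu> *\<^sub>R y \<in> Omega D W EW l u v"
      unfolding Omega_def real_rz using q(2) by auto
  qed
qed

lemma sip_only:
  fixes D :: "'d::finite itself"
  assumes "simple_graph V E" "u \<in> V" "v \<in> V" "u \<noteq> v" "{u, v} \<notin> E" "has_SIP D V E u v"
    "atom_of V (insert {u, v} E) A" "u \<in> A" "v \<in> A"
  shows "has_SIP D A (induced_edges (insert {u, v} E) A - {{u, v}}) u v"
  using assms
proof (induction "card V" arbitrary: V E rule: less_induct)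
  case less
  define F where "F = insert {u, v} E"
  have sgF: "simple_graph V F" using less.prems(1-5) unfolding F_def simple_graph_def by blast
  have fin: "finite V" using less.prems(1) unfolding simple_graph_def by auto
  have AV: "A \<subseteq> V" using less.prems(7) unfolding atom_of_def by auto
  have Aat: "is_atom A (induced_edges F A)" using less.prems(7) unfolding atom_of_def F_def by auto
  have finA: "finite A" using fin AV finite_subset by auto
  show ?case
  proof (cases "is_atom V F")
    case True
    have "A = V"
    proof (rule ccontr)
      assume "A \<noteq> V"
      then have "A \<subset> V" using AV by auto
      then have "\<not> is_atom V (induced_edges F V)" using less.prems(7) unfolding atom_of_def F_def by blast
      then show False using True simple_graph_induced_all[OF sgF] by simp
    qed
    moreover have "induced_edges F V - {{u, v}} = E"
      using simple_graph_induced_all[OF sgF] less.prems(5) unfolding F_def by auto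
    ultimately show ?thesis using less.prems(6) unfolding F_def by simp
  next
    case False
    then obtain K where K: "clique_separator V F K" using less.prems(2) unfolding is_atom_def by auto
    then have c2: "card (components (V - K) (induced_edges F (V - K))) \<ge> 2"
      unfolding clique_separator_def by auto
    obtain a0 where a0: "a0 \<in> V - K" "A - K \<noteq> {} \<Longrightarrow> a0 \<in> A - K"
    proof (cases "A - K = {}")
      case True
      then show ?thesis using that comps_nonempty[OF c2] by blast
    next
      case False
      then show ?thesis using that AV by blast
    qed
    define C1 where "C1 = {y \<in> V - K. reachable (V - K) (induced_edges F (V - K)) a0 y}"
    note sp = split_sep[OF fin K a0(1), folded C1_def]
    define W where "W = K \<union> C1"
    have WV: "W \<subseteq> V" using sp unfolding W_def by auto
    have AW: "A \<subseteq> W"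
    proof
      fix x assume x: "x \<in> A"
      show "x \<in> W"
      proof (cases "x \<in> K")
        case False
        then have xa: "x \<in> A - K" using x by auto
        then have a0A: "a0 \<in> A - K" using a0 by auto
        have "reachable (A - K) (induced_edges F (A - K)) a0 x"
          using atom_minus_clique[OF finA Aat sp(4) a0A xa] .
        moreover have "A - K \<subseteq> V - K" using AV by blast
        ultimately have "reachable (V - K) (induced_edges F (V - K)) a0 x"
          by (rule reach_induced_mono)
        then show ?thesis using xa AV unfolding W_def C1_def by auto
      qed (simp add: W_def)
    qed
    have cW: "card W < card V"
    proof -
      obtain b where "b \<in> V - K" "b \<notin> C1" using sp by auto
      then have "W \<subset> V" using WV unfolding W_def by auto
      then show ?thesis using fin psubset_card_mono by auto
    qed
    define EW where "EW = induced_edges F W - {{u, v}}"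
    have uvW: "u \<in> W" "v \<in> W" using AW less.prems(8,9) by auto
    have sgW: "simple_graph W EW"
      using simple_graph_induced[OF sgF WV] unfolding EW_def simple_graph_def by auto
    have nEW: "{u, v} \<notin> EW" unfolding EW_def by auto
    have dbl: "\<forall>e\<in>E. \<exists>a b. e = {a, b}" using less.prems(1) unfolding simple_graph_def by blast
    have bd: "b \<in> K" if ab: "{a, b} \<in> E" "a \<notin> W" "b \<in> W" for a b
    proof (rule ccontr)
      assume "b \<notin> K"
      then have bC: "b \<in> C1" using ab unfolding W_def by auto
      have "{b, a} \<in> F" using ab unfolding F_def by (simp add: insert_commute)
      moreover have "a \<in> V" using simple_graph_edge[OF less.prems(1) ab(1)] by auto
      moreover have "a \<notin> K" using ab unfolding W_def by auto
      ultimately have "a \<in> C1" using sp(7) bC by blast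
      then show False using ab unfolding W_def by auto
    qed
    have KW: "K \<subseteq> W" unfolding W_def by auto
    have clqK: "\<forall>x\<in>K. \<forall>y\<in>K. x \<noteq> y \<longrightarrow> {x, y} \<in> insert {u, v} E" using sp(4) unfolding F_def .
    have sipW: "has_SIP D W EW u v"
      unfolding EW_def F_def
      by (rule restrict[OF less.prems(6) uvW less.prems(5) less.prems(4) dbl bd KW clqK])
    have insEW: "insert {u, v} EW = induced_edges F W"
      using uvW unfolding EW_def F_def induced_edges_def by auto
    have atW: "atom_of W (insert {u, v} EW) A"
      unfolding atom_of_def insEW
    proof (intro conjI allI impI)
      show "A \<subseteq> W" by (rule AW)
      show "is_atom A (induced_edges (induced_edges F W) A)"
        using Aat induced_induced[OF AW] by simp
    next
      fix T assume T: "A \<subset> T \<and> T \<subseteq> W"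
      then have "\<not> is_atom T (induced_edges F T)"
        using less.prems(7) WV unfolding atom_of_def F_def by blast
      then show "\<not> is_atom T (induced_edges (induced_edges F W) T)"
        using induced_induced[of T W F] T by simp
    qed
    have "has_SIP D A (induced_edges (insert {u, v} EW) A - {{u, v}}) u v"
      using less.hyps[OF cW sgW uvW less.prems(4) nEW sipW atW less.prems(8,9)] .
    moreover have "induced_edges (insert {u, v} EW) A = induced_edges F A"
      unfolding insEW using induced_induced[OF AW] .
    ultimately show ?thesis unfolding F_def by simp
  qed
qed

theorem mainTheorem9:
  fixes V :: "'a set" and E :: "'a set set" and u v :: 'a
    and D :: "'d::finite itself"
  assumes "simple_graph V E"
    and "u \<in> V" and "v \<in> V" and "u \<noteq> v" and "{u, v} \<notin> E"
  shows "has_SIP D V E u v \<longleftrightarrow>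
    (\<forall>A. atom_of V (insert {u, v} E) A \<and> u \<in> A \<and> v \<in> A \<longrightarrow>
       has_SIP D A (induced_edges (insert {u, v} E) A - {{u, v}}) u v)"
proof (intro iffI allI impI)
  fix A assume h: "has_SIP D V E u v" and a: "atom_of V (insert {u, v} E) A \<and> u \<in> A \<and> v \<in> A"
  show "has_SIP D A (induced_edges (insert {u, v} E) A - {{u, v}}) u v"
    using sip_only[OF assms h] a by simp
next
  assume "\<forall>A. atom_of V (insert {u, v} E) A \<and> u \<in> A \<and> v \<in> A \<longrightarrow>
       has_SIP D A (induced_edges (insert {u, v} E) A - {{u, v}}) u v"
  then show "has_SIP D V E u v" by (rule sip_if[OF assms])
qed

end
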